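(* Let $R$ be an integral domain, $n\ge 2$, and let $a_1,\dots,a_n,c\in R$. Then \[ \det V(a_1,\dots,a_n)=\det V(a_1-c,a_2-c,\dots,a_n-c), \] where $V$ denotes the Vieta matrix.
   Context: For elements $b_1,\dots,b_m$ of a commutative ring and an integer $j\ge 0$, let $e_j(b_1,\dots,b_m)$ denote the $j$-th elementary symmetric polynomial, i.e. $e_0=1$ and $e_j(b_1,\dots,b_m)=\sum_{1\le l_1<\dots<l_j\le m} b_{l_1}\cdots b_{l_j}$ for $1\le j\le m$. The Vieta matrix $V(a_1,\dots,a_n)$ of $a_1,\dots,a_n$ is the $n\times n$ matrix whose entry in row $j+1$ and column $i$ (for $j=0,1,\dots,n-1$ and $i=1,\dots,n$) is $e_j(a_1,\dots,a_{i-1},a_{i+1},\dots,a_n)$, the $j$-th elementary symmetric polynomial of the $n-1$ elements obtained by omitting $a_i$. *)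

theory Defs
  imports "Jordan_Normal_Form.Determinant"
begin

definition elem_sym :: "nat \<Rightarrow> (nat \<Rightarrow> 'a::comm_ring_1) \<Rightarrow> nat set \<Rightarrow> 'a" where
  "elem_sym j b S = (\<Sum>T\<in>{T. T \<subseteq> S \<and> card T = j}. \<Prod>l\<in>T. b l)"

definition vieta_matrix :: "nat \<Rightarrow> (nat \<Rightarrow> 'a::comm_ring_1) \<Rightarrow> 'a mat" where
  "vieta_matrix n a = mat n n (\<lambda>(j, i). elem_sym j a ({0..<n} - {i}))"

end

theory Submission
  imports Defs
begin

lemma card_supsets:
  assumes "finite S" "U \<subseteq> S" "card U \<le> j"
  shows "card {T. T \<subseteq> S \<and> card T = j \<and> U \<subseteq> T} = (card S - card U) choose (j - card U)"
proof -
  have fU: "finite U" using assms finite_subset by blast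
  have eq: "{T. T \<subseteq> S \<and> card T = j \<and> U \<subseteq> T} = (\<lambda>V. V \<union> U) ` {V. V \<subseteq> S - U \<and> card V = j - card U}"
  proof (rule Set.set_eqI, rule iffI)
    fix T assume T: "T \<in> {T. T \<subseteq> S \<and> card T = j \<and> U \<subseteq> T}"
    have "card (T - U) = j - card U" using T fU by (simp add: card_Diff_subset)
    moreover have "T = (T - U) \<union> U" using T by blast
    ultimately show "T \<in> (\<lambda>V. V \<union> U) ` {V. V \<subseteq> S - U \<and> card V = j - card U}"
      using T by blast
  next
    fix T assume "T \<in> (\<lambda>V. V \<union> U) ` {V. V \<subseteq> S - U \<and> card V = j - card U}"
    then obtain V where V: "V \<subseteq> S - U" "card V = j - card U" "T = V \<union> U" by blast
    have fV: "finite V" using V assms finite_subset by (meson finite_Diff)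
    have "V \<inter> U = {}" using V by blast
    then have "card T = card V + card U" using V fV fU by (simp add: card_Un_disjoint)
    then show "T \<in> {T. T \<subseteq> S \<and> card T = j \<and> U \<subseteq> T}" using V assms by auto
  qed
  have inj: "inj_on (\<lambda>V. V \<union> U) {V. V \<subseteq> S - U \<and> card V = j - card U}"
    by (rule inj_onI) blast
  have "card {T. T \<subseteq> S \<and> card T = j \<and> U \<subseteq> T} = card {V. V \<subseteq> S - U \<and> card V = j - card U}"
    unfolding eq by (rule card_image[OF inj])
  also have "\<dots> = card (S - U) choose (j - card U)"
    using assms by (simp add: n_subsets)
  also have "card (S - U) = card S - card U" using assms fU by (simp add: card_Diff_subset)
  finally show ?thesis .
qed

lemma card_supsets0:
  assumes "finite S" "card U > j"
  shows "{T. T \<subseteq> S \<and> card T = j \<and> U \<subseteq> T} = {}"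
proof -
  { fix T assume "T \<subseteq> S" "card T = j" "U \<subseteq> T"
    then have "card U \<le> card T" using assms by (meson card_mono finite_subset)
    then have False using assms \<open>card T = j\<close> by simp }
  then show ?thesis by blast
qed

lemma prod_shift:
  fixes b :: "nat \<Rightarrow> 'a::comm_ring_1"
  assumes "finite T"
  shows "(\<Prod>l\<in>T. b l - c) = (\<Sum>U\<in>Pow T. (\<Prod>l\<in>U. b l) * (- c) ^ (card T - card U))"
proof -
  have "(\<Prod>l\<in>T. b l - c) = (\<Prod>l\<in>T. b l + (- c))" by simp
  also have "\<dots> = (\<Sum>U\<in>Pow T. (\<Prod>l\<in>U. b l) * (\<Prod>l\<in>T-U. - c))"
    by (rule prod_add[OF assms])
  also have "\<dots> = (\<Sum>U\<in>Pow T. (\<Prod>l\<in>U. b l) * (- c) ^ (card T - card U))"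
    apply (rule sum.cong, simp)
    using assms by (simp add: card_Diff_subset finite_subset)
  finally show ?thesis .
qed

definition shiftc :: "'a::comm_ring_1 \<Rightarrow> nat \<Rightarrow> nat \<Rightarrow> nat \<Rightarrow> 'a" where
  "shiftc c m j k = (if k \<le> j then of_nat ((m - k) choose (j - k)) * (- c) ^ (j - k) else 0)"

lemma elem_sym_shift:
  fixes b :: "nat \<Rightarrow> 'a::comm_ring_1"
  assumes S: "finite S"
  shows "elem_sym j (\<lambda>l. b l - c) S = (\<Sum>k\<le>card S. shiftc c (card S) j k * elem_sym k b S)"
proof -
  let ?A = "{T. T \<subseteq> S \<and> card T = j}"
  let ?g = "\<lambda>U. (\<Prod>l\<in>U. b l) * (- c) ^ (j - card U)"
  have fA: "finite ?A" using S by simp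
  have "elem_sym j (\<lambda>l. b l - c) S = (\<Sum>T\<in>?A. \<Sum>U\<in>Pow T. ?g U)"
    unfolding elem_sym_def
    apply (rule sum.cong, simp)
    using S by (auto simp: prod_shift finite_subset)
  also have "\<dots> = (\<Sum>T\<in>?A. \<Sum>U\<in>{U. U \<in> Pow S \<and> U \<subseteq> T}. ?g U)"
    by (rule sum.cong, simp) (rule sum.cong, auto)
  also have "\<dots> = (\<Sum>U\<in>Pow S. \<Sum>T\<in>{T. T \<in> ?A \<and> U \<subseteq> T}. ?g U)"
    by (rule sum.swap_restrict) (use S in auto)
  also have "\<dots> = (\<Sum>U\<in>Pow S. shiftc c (card S) j (card U) * (\<Prod>l\<in>U. b l))"
  proof (rule sum.cong, simp)
    fix U assume U: "U \<in> Pow S"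
    have "(\<Sum>T\<in>{T. T \<in> ?A \<and> U \<subseteq> T}. ?g U) = of_nat (card {T. T \<subseteq> S \<and> card T = j \<and> U \<subseteq> T}) * ?g U"
      by (simp add: conj_assoc)
    also have "\<dots> = shiftc c (card S) j (card U) * (\<Prod>l\<in>U. b l)"
    proof (cases "card U \<le> j")
      case True
      then show ?thesis using card_supsets[OF S _ True] U by (simp add: shiftc_def)
    next
      case False
      have e0: "{T. T \<subseteq> S \<and> card T = j \<and> U \<subseteq> T} = {}"
        using False by (intro card_supsets0[OF S]) simp
      show ?thesis unfolding e0 using False by (simp add: shiftc_def)
    qed
    finally show "(\<Sum>T\<in>{T. T \<in> ?A \<and> U \<subseteq> T}. ?g U) = shiftc c (card S) j (card U) * (\<Prod>l\<in>U. b l)" .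
  qed
  also have "\<dots> = (\<Sum>k\<le>card S. \<Sum>U\<in>{U. U \<in> Pow S \<and> card U = k}. shiftc c (card S) j (card U) * (\<Prod>l\<in>U. b l))"
    by (rule sum.group[symmetric]) (use S in \<open>auto intro: card_mono\<close>)
  also have "\<dots> = (\<Sum>k\<le>card S. shiftc c (card S) j k * elem_sym k b S)"
    unfolding elem_sym_def sum_distrib_left
    by (rule sum.cong, simp) (rule sum.cong, auto)
  finally show ?thesis .
qed

theorem corollary1:
  fixes a :: "nat \<Rightarrow> 'a::idom" and c :: 'a and n :: nat
  assumes "n \<ge> 2"
  shows "det (vieta_matrix n a) = det (vieta_matrix n (\<lambda>i. a i - c))"
proof -
  define L where "L = mat n n (\<lambda>(j, k). shiftc c (n - 1) j k)"
  have L: "L \<in> carrier_mat n n" unfolding L_def by simp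
  have V: "vieta_matrix n a \<in> carrier_mat n n" unfolding vieta_matrix_def by simp
  have eq: "vieta_matrix n (\<lambda>i. a i - c) = L * vieta_matrix n a"
  proof (rule eq_matI)
    fix j i assume j: "j < dim_row (L * vieta_matrix n a)" and i: "i < dim_col (L * vieta_matrix n a)"
    then have jn: "j < n" and in_: "i < n" using L V by auto
    have cS: "card ({0..<n} - {i}) = n - 1" using in_ by simp
    have "vieta_matrix n (\<lambda>i. a i - c) $$ (j, i) = elem_sym j (\<lambda>l. a l - c) ({0..<n} - {i})"
      using jn in_ by (simp add: vieta_matrix_def)
    also have "\<dots> = (\<Sum>k\<le>n - 1. shiftc c (n - 1) j k * elem_sym k a ({0..<n} - {i}))"
      using elem_sym_shift[of "{0..<n} - {i}" j a c] cS by simp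
    also have "\<dots> = (\<Sum>k<n. shiftc c (n - 1) j k * elem_sym k a ({0..<n} - {i}))"
      using assms by (intro sum.cong) auto
    also have "\<dots> = (L * vieta_matrix n a) $$ (j, i)"
      using jn in_ L V unfolding L_def vieta_matrix_def
      by (simp add: scalar_prod_def atLeast0LessThan)
    finally show "vieta_matrix n (\<lambda>i. a i - c) $$ (j, i) = (L * vieta_matrix n a) $$ (j, i)" .
  qed (use L V in \<open>auto simp: vieta_matrix_def\<close>)
  have "det L = prod_list (diag_mat L)"
    by (rule det_lower_triangular[OF _ L]) (simp add: L_def shiftc_def)
  also have "\<dots> = 1"
  proof -
    have h: "map (\<lambda>i. L $$ (i,i)) [0..<n] = map (\<lambda>_. 1) [0..<n]"
      by (rule map_cong) (auto simp: L_def shiftc_def)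
    have o: "prod_list (map (\<lambda>_. 1::'a) xs) = 1" for xs :: "nat list" by (induct xs) auto
    have "diag_mat L = map (\<lambda>i. L $$ (i,i)) [0..<n]" unfolding diag_mat_def using L by simp
    then show ?thesis using h o by metis
  qed
  finally have "det L = 1" .
  then show ?thesis unfolding eq det_mult[OF L V] by simp
qed

end
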